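(* Let $\triangle$ be an apexed triangle with definer $s$ and let $x\in P$. If there is a point $x'$ on $\pi(s,x)$ with $f_\triangle(x')<d(s,x')$, then $f_\triangle(x)<d(s,x)$.
   Context: $P$ is a simple polygon, $S$ a finite set of sites in $P$, $\pi(x,y)$ the shortest path in $P$ between $x$ and $y$, and $d(x,y)$ its Euclidean length. An apexed triangle is a Euclidean triangle $\triangle\subseteq P$ with corners $a,b,c$, where the apex $a$ is a vertex of $P$, $b,c$ lie on a common edge of $P$, together with a site $s\in S$ (the definer) such that $d(x,s)=\|x-a\|+d(a,s)$ for all $x\in\triangle$. Its function $f_\triangle$ is defined as follows. Let $u_1=(b-a)/\|b-a\|$, $u_2=(c-a)/\|c-a\|$, $R_{in}=\{a+\lambda u_1+\mu u_2:\lambda,\mu\ge0\}$, $L=\{x\notin R_{in}:\langle x-a,u_1\rangle\ge\langle x-a,u_2\rangle\}$, $R=\{x\notin R_{in}:\langle x-a,u_2\rangle>\langle x-a,u_1\rangle\}$, $L_{top}=\{x\in L:\langle x-a,u_1\rangle<0\}$, $R_{top}=\{x\in R:\langle x-a,u_2\rangle<0\}$. For $x\in L$ (resp. $R$) let $\hat x$ be the orthogonal projection of $x$ onto the line through $a$ with direction $u_1$ (resp. $u_2$); for $x\in R_{in}$ let $\hat x=x$. Then $f_\triangle(x)=d(a,s)-\|\hat x-a\|$ for $x\in L_{top}\cup R_{top}$ and $f_\triangle(x)=d(a,s)+\|\hat x-a\|$ otherwise. *)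

theory Defs
  imports "HOL-Analysis.Analysis"
begin

type_synonym pt = "real ^ 2"

definition poly_edge :: "pt list \<Rightarrow> nat \<Rightarrow> pt set" where
  "poly_edge vs i = closed_segment (vs ! i) (vs ! ((i + 1) mod length vs))"

definition simple_polygon :: "pt list \<Rightarrow> bool" where
  "simple_polygon vs \<longleftrightarrow>
     length vs \<ge> 3 \<and> distinct vs \<and>
     (\<forall>i < length vs. \<forall>j < length vs. i \<noteq> j \<longrightarrow>
        (if j = (i + 1) mod length vs then poly_edge vs i \<inter> poly_edge vs j = {vs ! j}
         else if i = (j + 1) mod length vs then poly_edge vs i \<inter> poly_edge vs j = {vs ! i}
         else poly_edge vs i \<inter> poly_edge vs j = {}))"

definition poly_boundary :: "pt list \<Rightarrow> pt set" where
  "poly_boundary vs = (\<Union>i < length vs. poly_edge vs i)"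

definition polygon_region :: "pt list \<Rightarrow> pt set" where
  "polygon_region vs = poly_boundary vs \<union> inside (poly_boundary vs)"

definition poly_chain :: "pt set \<Rightarrow> pt \<Rightarrow> pt \<Rightarrow> pt list \<Rightarrow> bool" where
  "poly_chain P x y ps \<longleftrightarrow> ps \<noteq> [] \<and> hd ps = x \<and> last ps = y \<and>
     (\<forall>i < length ps - 1. closed_segment (ps ! i) (ps ! Suc i) \<subseteq> P)"

definition chain_len :: "pt list \<Rightarrow> real" where
  "chain_len ps = (\<Sum>i < length ps - 1. dist (ps ! i) (ps ! Suc i))"

definition chain_image :: "pt list \<Rightarrow> pt set" where
  "chain_image ps = set ps \<union> (\<Union>i < length ps - 1. closed_segment (ps ! i) (ps ! Suc i))"

definition gdist :: "pt set \<Rightarrow> pt \<Rightarrow> pt \<Rightarrow> real" where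
  "gdist P x y = Inf (chain_len ` {ps. poly_chain P x y ps})"

definition on_shortest_path :: "pt set \<Rightarrow> pt \<Rightarrow> pt \<Rightarrow> pt \<Rightarrow> bool" where
  "on_shortest_path P x y z \<longleftrightarrow>
     (\<exists>ps. poly_chain P x y ps \<and> chain_len ps = gdist P x y \<and> z \<in> chain_image ps)"

definition apexed_triangle :: "pt list \<Rightarrow> pt set \<Rightarrow> pt \<Rightarrow> pt \<Rightarrow> pt \<Rightarrow> pt \<Rightarrow> bool" where
  "apexed_triangle vs S a b c s \<longleftrightarrow>
     \<not> collinear {a, b, c} \<and>
     convex hull {a, b, c} \<subseteq> polygon_region vs \<and>
     a \<in> set vs \<and>
     (\<exists>i < length vs. b \<in> poly_edge vs i \<and> c \<in> poly_edge vs i) \<and>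
     s \<in> S \<and>
     (\<forall>x \<in> convex hull {a, b, c}.
        gdist (polygon_region vs) x s = norm (x - a) + gdist (polygon_region vs) a s)"

definition f_tri :: "pt set \<Rightarrow> pt \<Rightarrow> pt \<Rightarrow> pt \<Rightarrow> pt \<Rightarrow> pt \<Rightarrow> real" where
  "f_tri P a b c s x =
    (let u1 = (1 / norm (b - a)) *\<^sub>R (b - a);
         u2 = (1 / norm (c - a)) *\<^sub>R (c - a);
         Rin = {a + l *\<^sub>R u1 + m *\<^sub>R u2 | l m. l \<ge> 0 \<and> m \<ge> 0};
         inL = (x \<notin> Rin \<and> (x - a) \<bullet> u1 \<ge> (x - a) \<bullet> u2);
         inR = (x \<notin> Rin \<and> (x - a) \<bullet> u2 > (x - a) \<bullet> u1);
         xh = (if inL then a + ((x - a) \<bullet> u1) *\<^sub>R u1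
               else if inR then a + ((x - a) \<bullet> u2) *\<^sub>R u2 else x);
         top = ((inL \<and> (x - a) \<bullet> u1 < 0) \<or> (inR \<and> (x - a) \<bullet> u2 < 0))
     in if top then gdist P a s - norm (xh - a) else gdist P a s + norm (xh - a))"

end

theory Submission
  imports Defs
begin


definition seg_ok :: "pt set \<Rightarrow> pt list \<Rightarrow> bool" where
  "seg_ok P ps \<longleftrightarrow> (\<forall>i < length ps - 1. closed_segment (ps ! i) (ps ! Suc i) \<subseteq> P)"

lemma seg_ok_single[simp]: "seg_ok P [p]" by (simp add: seg_ok_def)
lemma seg_ok_cons2[simp]: "seg_ok P (p#q#rs) \<longleftrightarrow> closed_segment p q \<subseteq> P \<and> seg_ok P (q#rs)"
  unfolding seg_ok_def by (simp only: length_Cons diff_Suc_1 All_less_Suc2) simp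

lemma chain_len_single[simp]: "chain_len [p] = 0" by (simp add: chain_len_def)
lemma chain_len_cons2[simp]: "chain_len (p#q#rs) = dist p q + chain_len (q#rs)"
  unfolding chain_len_def by (simp only: length_Cons diff_Suc_1 sum.lessThan_Suc_shift) simp

lemma chain_image_single[simp]: "chain_image [p] = {p}" by (simp add: chain_image_def)
lemma chain_image_cons2[simp]: "chain_image (p#q#rs) = closed_segment p q \<union> chain_image (q#rs)"
  by (auto simp: chain_image_def lessThan_Suc_eq_insert_0)

lemma chain_len_ge: "ps \<noteq> [] \<Longrightarrow> dist (hd ps) (last ps) \<le> chain_len ps"
proof (induction ps rule: induct_list012)
  case (3 p q rs)
  then show ?case using dist_triangle[of p "last (q#rs)" q] by simp
qed auto

lemma chain_len_nonneg: "ps \<noteq> [] \<Longrightarrow> 0 \<le> chain_len ps"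
  using chain_len_ge zero_le_dist order_trans by blast

lemma chain_split:
  "ps \<noteq> [] \<Longrightarrow> seg_ok P ps \<Longrightarrow> z \<in> chain_image ps \<Longrightarrow>
   \<exists>ps1. ps1 \<noteq> [] \<and> hd ps1 = hd ps \<and> last ps1 = z \<and> seg_ok P ps1 \<and>
         chain_len ps1 + dist z (last ps) \<le> chain_len ps"
proof (induction ps rule: induct_list012)
  case (2 p)
  then show ?case by (intro exI[of _ "[p]"]) auto
next
  case (3 p q rs)
  show ?case
  proof (cases "z \<in> closed_segment p q")
    case True
    have "between (p,q) z" using True by (simp only: between_mem_segment)
    then have dz: "dist p z + dist z q = dist p q" by (simp only: between)
    have pq: "closed_segment p q \<subseteq> P" using 3(4) by simp
    have "closed_segment p z \<subseteq> closed_segment p q" using True by (simp add: subset_closed_segment)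
    then have sub: "closed_segment p z \<subseteq> P" using pq by blast
    have "dist z (last (q#rs)) \<le> dist z q + dist q (last (q#rs))" by (rule dist_triangle)
    also have "dist q (last (q#rs)) \<le> chain_len (q#rs)" using chain_len_ge[of "q#rs"] by simp
    finally have "dist p z + dist z (last (q#rs)) \<le> dist p q + chain_len (q#rs)" using dz by linarith
    then have "chain_len [p,z] + dist z (last (p#q#rs)) \<le> chain_len (p#q#rs)" by simp
    moreover have "seg_ok P [p,z]" using sub by simp
    ultimately show ?thesis by (intro exI[of _ "[p,z]"]) simp
  next
    case False
    then have "z \<in> chain_image (q#rs)" using 3(5) by simp
    moreover have "seg_ok P (q#rs)" using 3(4) by simp
    ultimately obtain ps1 where ps1: "ps1 \<noteq> []" "hd ps1 = q" "last ps1 = z" "seg_ok P ps1"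
        "chain_len ps1 + dist z (last (q#rs)) \<le> chain_len (q#rs)"
      using "3.IH"(2) by fastforce
    obtain rs1 where rs1: "ps1 = q # rs1" using ps1(1,2) by (cases ps1) auto
    have "seg_ok P (p#ps1)" using 3(4) ps1(4) rs1 by simp
    moreover have "chain_len (p#ps1) + dist z (last (p#q#rs)) \<le> chain_len (p#q#rs)"
      using ps1(5) rs1 by simp
    moreover have "last (p#ps1) = z" using ps1(3) rs1 by simp
    ultimately show ?thesis by (intro exI[of _ "p#ps1"]) simp
  qed
qed auto

lemma gdist_split:
  assumes "on_shortest_path P s x z"
  shows "gdist P s z + dist z x \<le> gdist P s x"
proof -
  obtain ps where ps: "poly_chain P s x ps" "chain_len ps = gdist P s x" "z \<in> chain_image ps"
    using assms unfolding on_shortest_path_def by blast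
  have "ps \<noteq> []" "seg_ok P ps" using ps(1) by (auto simp: poly_chain_def seg_ok_def)
  from chain_split[OF this ps(3)] obtain ps1 where ps1: "ps1 \<noteq> []" "hd ps1 = hd ps" "last ps1 = z"
     "seg_ok P ps1" "chain_len ps1 + dist z (last ps) \<le> chain_len ps" by blast
  have pc: "poly_chain P s z ps1" using ps1 ps(1) by (auto simp: poly_chain_def seg_ok_def)
  have "gdist P s z \<le> chain_len ps1" unfolding gdist_def
  proof (rule cInf_lower)
    show "chain_len ps1 \<in> chain_len ` {ps. poly_chain P s z ps}" using pc by blast
    show "bdd_below (chain_len ` {ps. poly_chain P s z ps})"
      by (rule bdd_belowI[of _ 0]) (auto simp: poly_chain_def intro: chain_len_nonneg)
  qed
  then show ?thesis using ps1(5) ps(1,2) by (auto simp: poly_chain_def)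
qed

lemma real_key:
  fixes k l m al be :: real
  assumes k1: "k < 1" and k2: "-1 \<le> k" and l: "l \<ge> 0" and m: "m \<ge> 0"
    and n: "l^2 + m^2 + 2*l*m*k = 1" and ab: "al < 0 \<or> be < 0"
  shows "al*l + al*m*k + be*l*k + be*m \<le> max (al + be*k) (al*k + be)"
proof -
  define a1 where "a1 = l + m*k"
  define a2 where "a2 = l*k + m"
  have "(l+m)^2 = 1 + 2*l*m*(1-k)" using n by (simp add: power2_eq_square algebra_simps)
  moreover have "2*l*m*(1-k) \<ge> 0" using l m k1 by simp
  ultimately have s1: "1 \<le> (l+m)^2" by linarith
  have lm: "l + m \<ge> 1" using s1 l m
    by (metis add_nonneg_nonneg one_power2 power2_le_imp_le)
  have e1: "a1^2 - k^2 = (1-k^2)*(1-m^2)" unfolding a1_def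
  proof -
    have "1 - m^2 = l^2 + 2*l*m*k" using n by linarith
    then show "(l + m * k)\<^sup>2 - k\<^sup>2 = (1 - k\<^sup>2) * (1 - m\<^sup>2)" by (simp add: power2_eq_square algebra_simps)
  qed
  have e2: "a2^2 - k^2 = (1-k^2)*(1-l^2)" unfolding a2_def
  proof -
    have "1 - l^2 = m^2 + 2*l*m*k" using n by linarith
    then show "(l*k + m)\<^sup>2 - k\<^sup>2 = (1 - k\<^sup>2) * (1 - l\<^sup>2)" by (simp add: power2_eq_square algebra_simps)
  qed
  have f1: "1 - a1^2 = m^2*(1-k^2)" unfolding a1_def
  proof -
    have "1 - m^2 = l^2 + 2*l*m*k" using n by linarith
    then show "1 - (l + m * k)\<^sup>2 = m^2 * (1 - k\<^sup>2)" by (simp add: power2_eq_square algebra_simps)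
  qed
  have f2: "1 - a2^2 = l^2*(1-k^2)" unfolding a2_def
  proof -
    have "1 - l^2 = m^2 + 2*l*m*k" using n by linarith
    then show "1 - (l*k + m)\<^sup>2 = l^2 * (1 - k\<^sup>2)" by (simp add: power2_eq_square algebra_simps)
  qed
  have kk: "1 - k^2 \<ge> 0" using k1 k2 by (simp add: abs_le_square_iff power2_eq_square) (smt (verit) mult_le_one mult_minus_left mult_minus_right)
  have a1u: "a1 \<le> 1" using f1 kk
    by (metis abs_le_square_iff abs_one abs_real_def diff_ge_0_iff_ge mult_nonneg_nonneg one_power2 zero_le_power2 order_trans abs_ge_self)
  have a2u: "a2 \<le> 1" using f2 kk
    by (metis abs_le_square_iff abs_one abs_real_def diff_ge_0_iff_ge mult_nonneg_nonneg one_power2 zero_le_power2 order_trans abs_ge_self)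
  have gen: "l + m*k \<ge> k" if l: "l \<ge> 0" and m: "m \<ge> 0" and n: "l^2 + m^2 + 2*l*m*k = 1"
      and e1: "(l+m*k)^2 - k^2 = (1-k^2)*(1-m^2)" for l m
  proof (cases "m \<le> 1")
    case True
    show ?thesis
    proof (cases "k < 0")
      case True
      have "m*k \<ge> k" using \<open>m \<le> 1\<close> True by (simp add: mult_le_cancel_right1)
      then show ?thesis using l by linarith
    next
      case False
      have "(1-k^2)*(1-m^2) \<ge> 0" using kk True m
        by (simp add: power_le_one)
      then have "(l+m*k)^2 \<ge> k^2" using e1 by linarith
      moreover have "l + m*k \<ge> 0" using l m False by simp
      ultimately show ?thesis by (rule power2_le_imp_le)
    qed
  next
    case False
    have "k < 0"
    proof (rule ccontr)
      assume "\<not> k < 0"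
      then have "2*l*m*k \<ge> 0" using l m by simp
      moreover have "m^2 > 1" using False by (simp add: one_less_power)
      ultimately show False using n by (smt (verit) zero_le_power2)
    qed
    have "1 - m^2 < 0" using False by (simp add: one_less_power)
    then have "(1-k^2)*(1-m^2) \<le> 0" using kk by (simp add: mult_nonneg_nonpos)
    then have "(l+m*k)^2 \<le> k^2" using e1 by linarith
    then have "\<bar>l+m*k\<bar> \<le> \<bar>k\<bar>" by (simp add: abs_le_square_iff)
    then show ?thesis using \<open>k<0\<close> by linarith
  qed
  have a1k: "a1 \<ge> k" unfolding a1_def using gen[OF l m n] e1 unfolding a1_def by simp
  have a2k: "a2 \<ge> k" unfolding a2_def
  proof -
    have n': "m^2 + l^2 + 2*m*l*k = 1" using n by (simp add: algebra_simps)
    have "(m + l*k)^2 - k^2 = (1-k^2)*(1-l^2)" using e2 unfolding a2_def by (simp add: algebra_simps)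
    from gen[OF m l n' this] show "l*k + m \<ge> k" by (simp add: algebra_simps)
  qed
  have vw: "al*l + al*m*k + be*l*k + be*m = al*a1 + be*a2" unfolding a1_def a2_def by (simp add: algebra_simps)
  have sum: "a1 + a2 \<ge> 1 + k"
  proof -
    have "a1 + a2 = (l+m)*(1+k)" unfolding a1_def a2_def by (simp add: algebra_simps)
    moreover have "(l+m)*(1+k) \<ge> 1*(1+k)" using lm k2 by (intro mult_right_mono) auto
    ultimately show ?thesis by simp
  qed
  let ?vw = "al*a1 + be*a2"
  have c1: "al*k + be - ?vw = al*(k-a1) + be*(1-a2)" by (simp add: algebra_simps)
  have c2: "al + be*k - ?vw = al*(1-a1) + be*(k-a2)" by (simp add: algebra_simps)
  consider "al < 0" "be \<ge> 0" | "al \<ge> 0" "be < 0" | "al < 0" "be < 0" using ab by linarith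
  then show ?thesis
  proof cases
    case 1
    have "al*(k-a1) \<ge> 0" using 1 a1k by (simp add: mult_nonpos_nonpos)
    moreover have "be*(1-a2) \<ge> 0" using 1 a2u by simp
    ultimately show ?thesis using c1 vw by linarith
  next
    case 2
    have "be*(k-a2) \<ge> 0" using 2 a2k by (simp add: mult_nonpos_nonpos)
    moreover have "al*(1-a1) \<ge> 0" using 2 a1u by simp
    ultimately show ?thesis using c2 vw by linarith
  next
    case 3
    have id: "(a1-k)*(al + be*k - ?vw) + (1-a1)*(al*k + be - ?vw) = be*((1-k)*(1+k-a1-a2))"
      by (simp add: algebra_simps)
    have "be*((1-k)*(1+k-a1-a2)) \<ge> 0" using 3 sum k1
      by (intro mult_nonpos_nonpos) (auto intro: mult_nonneg_nonpos)
    show ?thesis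
    proof (rule ccontr)
      assume "\<not> ?thesis"
      then have h1: "al + be*k - ?vw < 0" and h2: "al*k + be - ?vw < 0" using vw by auto
      have "(a1-k)*(al + be*k - ?vw) \<le> 0" using a1k h1 by (simp add: mult_nonneg_nonpos)
      moreover have "(1-a1)*(al*k + be - ?vw) \<le> 0" using a1u h2 by (simp add: mult_nonneg_nonpos)
      moreover have "(a1-k)*(al + be*k - ?vw) < 0 \<or> (1-a1)*(al*k + be - ?vw) < 0"
      proof (cases "a1 = k")
        case True then have "1 - a1 > 0" using k1 by simp
        then show ?thesis using h2 by (simp add: mult_pos_neg)
      next
        case False then have "a1 - k > 0" using a1k by simp
        then show ?thesis using h1 by (simp add: mult_pos_neg)
      qed
      ultimately show False using id \<open>be*((1-k)*(1+k-a1-a2)) \<ge> 0\<close> by linarith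
    qed
  qed
qed

lemma vec_key:
  fixes u1 u2 v w :: "'a::real_inner"
  assumes u1: "norm u1 = 1" and u2: "norm u2 = 1" and ne: "u1 \<noteq> u2"
    and v: "v = al *\<^sub>R u1 + be *\<^sub>R u2" and ab: "al < 0 \<or> be < 0"
    and w: "w = l *\<^sub>R u1 + m *\<^sub>R u2" and l: "l \<ge> 0" and m: "m \<ge> 0" and nw: "norm w = 1"
  shows "v \<bullet> w \<le> max (v \<bullet> u1) (v \<bullet> u2)"
proof -
  define k where "k = u1 \<bullet> u2"
  have u11: "u1 \<bullet> u1 = 1" using u1 by (simp add: dot_square_norm)
  have u22: "u2 \<bullet> u2 = 1" using u2 by (simp add: dot_square_norm)
  have "\<bar>k\<bar> \<le> 1" unfolding k_def using Cauchy_Schwarz_ineq2[of u1 u2] u1 u2 by simp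
  then have k2: "-1 \<le> k" by linarith
  have "norm (u1 - u2)^2 = 2 - 2*k" unfolding k_def
    by (simp add: power2_norm_eq_inner inner_diff_left inner_diff_right u11 u22 inner_commute)
  moreover have "norm (u1 - u2) > 0" using ne by simp
  ultimately have k1: "k < 1" by (smt (verit) zero_less_power)
  have "w \<bullet> w = 1" using nw by (simp add: dot_square_norm)
  then have n: "l^2 + m^2 + 2*l*m*k = 1" unfolding w k_def
    by (simp add: inner_add_left inner_add_right u11 u22 inner_commute power2_eq_square algebra_simps)
  have vw: "v \<bullet> w = al*l + al*m*k + be*l*k + be*m" unfolding v w k_def
    by (simp add: inner_add_left inner_add_right u11 u22 inner_commute algebra_simps)
  have p: "v \<bullet> u1 = al + be*k" unfolding v k_def
    by (simp add: inner_add_left inner_add_right u11 inner_commute)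
  have q: "v \<bullet> u2 = al*k + be" unfolding v k_def
    by (simp add: inner_add_left inner_add_right u22 inner_commute)
  show ?thesis unfolding vw p q by (rule real_key[OF k1 k2 l m n ab])
qed

lemma basis2:
  fixes p q v :: "real^2"
  assumes "\<not> collinear {0, p, q}"
  shows "\<exists>al be. v = al *\<^sub>R p + be *\<^sub>R q"
proof -
  define d where "d = p$1*q$2 - p$2*q$1"
  have d: "d \<noteq> 0"
  proof
    assume d0: "d = 0"
    have "p \<noteq> 0" using assms by auto
    then have "p$1 \<noteq> 0 \<or> p$2 \<noteq> 0" by (simp add: vec_eq_iff forall_2)
    then have "\<exists>c. q = c *\<^sub>R p"
    proof
      assume h: "p$1 \<noteq> 0"
      show ?thesis using h d0 unfolding d_def
        by (intro exI[of _ "q$1/p$1"]) (auto simp: vec_eq_iff forall_2 field_simps)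
    next
      assume h: "p$2 \<noteq> 0"
      show ?thesis using h d0 unfolding d_def
        by (intro exI[of _ "q$2/p$2"]) (auto simp: vec_eq_iff forall_2 field_simps)
    qed
    then show False using assms by (simp add: collinear_lemma)
  qed
  define al where "al = (v$1*q$2 - v$2*q$1)/d"
  define be where "be = (p$1* v$2 - p$2* v$1)/d"
  have ad: "al * d = v$1*q$2 - v$2*q$1" unfolding al_def using d by simp
  have bd: "be * d = p$1* v$2 - p$2* v$1" unfolding be_def using d by simp
  have "(al*p$1 + be*q$1) * d = (al*d)*p$1 + (be*d)*q$1" by (simp add: algebra_simps)
  also have "\<dots> = v$1 * d" unfolding ad bd by (simp add: d_def algebra_simps)
  finally have "(al*p$1 + be*q$1) * d = v$1 * d" .
  then have c1: "al*p$1 + be*q$1 = v$1" using d by simp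
  have "(al*p$2 + be*q$2) * d = (al*d)*p$2 + (be*d)*q$2" by (simp add: algebra_simps)
  also have "\<dots> = v$2 * d" unfolding ad bd by (simp add: d_def algebra_simps)
  finally have "(al*p$2 + be*q$2) * d = v$2 * d" .
  then have c2: "al*p$2 + be*q$2 = v$2" using d by simp
  have "v = al *\<^sub>R p + be *\<^sub>R q"
    using c1 c2 by (auto simp: vec_eq_iff forall_2)
  then show ?thesis by blast
qed


definition Gf :: "pt \<Rightarrow> pt \<Rightarrow> pt \<Rightarrow> pt \<Rightarrow> real" where
  "Gf a u1 u2 y = (if y \<in> {a + l *\<^sub>R u1 + m *\<^sub>R u2 | l m. l \<ge> 0 \<and> m \<ge> 0} then norm (y - a)
     else max ((y - a) \<bullet> u1) ((y - a) \<bullet> u2))"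

lemma f_eq:
  assumes n1: "norm ((1 / norm (b - a)) *\<^sub>R (b - a)) = 1" and n2: "norm ((1 / norm (c - a)) *\<^sub>R (c - a)) = 1"
  shows "f_tri P a b c s y = gdist P a s + Gf a ((1 / norm (b - a)) *\<^sub>R (b - a)) ((1 / norm (c - a)) *\<^sub>R (c - a)) y"
proof -
  define u1 where "u1 = (1 / norm (b - a)) *\<^sub>R (b - a)"
  define u2 where "u2 = (1 / norm (c - a)) *\<^sub>R (c - a)"
  define Rin where "Rin = {a + l *\<^sub>R u1 + m *\<^sub>R u2 | l m. l \<ge> 0 \<and> m \<ge> 0}"
  have n1': "norm u1 = 1" and n2': "norm u2 = 1" using n1 n2 unfolding u1_def u2_def by auto
  show ?thesis
    unfolding f_tri_def Let_def Gf_def u1_def[symmetric] u2_def[symmetric] Rin_def[symmetric]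
    using n1' n2' by (auto simp: max_def)
qed

lemma G_lip:
  fixes a u1 u2 x x' :: pt
  assumes n1: "norm u1 = 1" and n2: "norm u2 = 1" and ne: "u1 \<noteq> u2"
    and bas: "\<And>v. \<exists>al be. v = al *\<^sub>R u1 + be *\<^sub>R u2"
  shows "Gf a u1 u2 x \<le> Gf a u1 u2 x' + dist x x'"
proof -
  define Rin where "Rin = {a + l *\<^sub>R u1 + m *\<^sub>R u2 | l m. l \<ge> 0 \<and> m \<ge> 0}"
  have G: "Gf a u1 u2 y = (if y \<in> Rin then norm (y - a) else max ((y - a) \<bullet> u1) ((y - a) \<bullet> u2))" for y
    unfolding Gf_def Rin_def by simp
  have low: "(y - a) \<bullet> u \<le> Gf a u1 u2 y" if "u = u1 \<or> u = u2" for y u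
  proof (cases "y \<in> Rin")
    case True
    have "(y - a) \<bullet> u \<le> norm (y - a) * norm u" by (rule norm_cauchy_schwarz)
    then show ?thesis using True that n1 n2 G by auto
  next
    case False
    then show ?thesis using that G by auto
  qed
  have lip1: "(x - a) \<bullet> u \<le> Gf a u1 u2 x' + dist x x'" if u: "u = u1 \<or> u = u2" for u
  proof -
    have nu: "norm u = 1" using u n1 n2 by auto
    have "(x - a) \<bullet> u = (x' - a) \<bullet> u + (x - x') \<bullet> u" by (simp add: inner_diff_left)
    moreover have "(x - x') \<bullet> u \<le> dist x x'" using norm_cauchy_schwarz[of "x - x'" u] nu by (simp add: dist_norm)
    moreover have "(x' - a) \<bullet> u \<le> Gf a u1 u2 x'" using low u by blast
    ultimately show ?thesis by linarith
  qed
  show ?thesis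
  proof (cases "x \<in> Rin")
    case False
    then show ?thesis using G lip1 by auto
  next
    case True
    then obtain l m where lm: "x = a + l *\<^sub>R u1 + m *\<^sub>R u2" "l \<ge> 0" "m \<ge> 0" unfolding Rin_def by blast
    define v where "v = x - a"
    have Gx: "Gf a u1 u2 x = norm v" using True G v_def by simp
    show ?thesis
    proof (cases "v = 0")
      case True
      then have xa: "x = a" using v_def by simp
      have "- dist x x' \<le> (x' - a) \<bullet> u1"
      proof -
        have "(-(x' - a)) \<bullet> u1 \<le> norm (-(x' - a)) * norm u1" by (rule norm_cauchy_schwarz)
        then have "- ((x' - a) \<bullet> u1) \<le> norm (x' - a)" using n1 by (simp only: inner_minus_left norm_minus_cancel mult_1_right)
        then show ?thesis using xa by (simp add: dist_norm norm_minus_commute[of a x'])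
      qed
      then show ?thesis using Gx True low[of u1 x'] by simp
    next
      case False
      define nv where "nv = norm v"
      have nv: "nv > 0" using False nv_def by simp
      define w where "w = (1/nv) *\<^sub>R v"
      have nw: "norm w = 1" using nv by (simp add: w_def nv_def)
      have wlm: "w = (l/nv) *\<^sub>R u1 + (m/nv) *\<^sub>R u2" using lm(1) unfolding w_def v_def
        by (simp add: scaleR_add_right)
      have vw: "v \<bullet> w = nv" using nv unfolding w_def nv_def by (simp add: dot_square_norm power2_eq_square)
      have key: "(x' - a) \<bullet> w \<le> Gf a u1 u2 x'"
      proof (cases "x' \<in> Rin")
        case True
        then show ?thesis using norm_cauchy_schwarz[of "x' - a" w] nw G by simp
      next
        case False
        obtain al be where ab: "x' - a = al *\<^sub>R u1 + be *\<^sub>R u2" using bas by blast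
        have "al < 0 \<or> be < 0"
        proof (rule ccontr)
          assume "\<not> (al < 0 \<or> be < 0)"
          then have "x' \<in> Rin" unfolding Rin_def using ab
            by (intro CollectI exI[of _ al] exI[of _ be]) (auto simp: algebra_simps)
          then show False using False by simp
        qed
        from vec_key[OF n1 n2 ne ab this wlm _ _ nw] lm nv
        have "(x' - a) \<bullet> w \<le> max ((x' - a) \<bullet> u1) ((x' - a) \<bullet> u2)" by simp
        then show ?thesis using G False by simp
      qed
      have "v \<bullet> w = (x' - a) \<bullet> w + (x - x') \<bullet> w" unfolding v_def by (simp add: inner_diff_left)
      moreover have "(x - x') \<bullet> w \<le> dist x x'" using norm_cauchy_schwarz[of "x - x'" w] nw by (simp add: dist_norm)
      ultimately show ?thesis using Gx vw key nv_def by linarith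
    qed
  qed
qed

theorem mainTheorem9:
  fixes vs :: "pt list" and S :: "pt set" and a b c s x x' :: pt
  assumes "simple_polygon vs"
    and "finite S" and "S \<subseteq> polygon_region vs"
    and "apexed_triangle vs S a b c s"
    and "x \<in> polygon_region vs"
    and "on_shortest_path (polygon_region vs) s x x'"
    and "f_tri (polygon_region vs) a b c s x' < gdist (polygon_region vs) s x'"
  shows "f_tri (polygon_region vs) a b c s x < gdist (polygon_region vs) s x"
proof -
  let ?P = "polygon_region vs"
  have nc: "\<not> collinear {a, b, c}" by (rule conjunct1[OF assms(4)[unfolded apexed_triangle_def]])
  have "collinear {a, b, c} = collinear {b, a, c}" by (simp add: insert_commute)
  also have "\<dots> = collinear {0, b - a, c - a}" by (rule collinear_3) simp
  finally have nc0: "\<not> collinear {0, b - a, c - a}" using nc by simp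
  have ba: "b - a \<noteq> 0" using nc0 by auto
  have ca: "c - a \<noteq> 0" using nc0 by (auto simp: collinear_lemma)
  define u1 where "u1 = (1 / norm (b - a)) *\<^sub>R (b - a)"
  define u2 where "u2 = (1 / norm (c - a)) *\<^sub>R (c - a)"
  have n1: "norm u1 = 1" using ba unfolding u1_def by simp
  have n2: "norm u2 = 1" using ca unfolding u2_def by simp
  have bu: "b - a = norm (b - a) *\<^sub>R u1" using ba unfolding u1_def by simp
  have cu: "c - a = norm (c - a) *\<^sub>R u2" using ca unfolding u2_def by simp
  have ne: "u1 \<noteq> u2"
  proof
    assume "u1 = u2"
    then have h: "c - a = norm (c - a) *\<^sub>R u1" using cu by metis
    have "norm (c - a) *\<^sub>R u1 = (norm (c - a) / norm (b - a)) *\<^sub>R (b - a)"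
      unfolding u1_def by simp
    then have "c - a = (norm (c - a) / norm (b - a)) *\<^sub>R (b - a)" using h by (rule trans[rotated])
    then have "collinear {0, b - a, c - a}" by (auto simp: collinear_lemma)
    then show False using nc0 by simp
  qed
  have bas: "\<exists>al be. v = al *\<^sub>R u1 + be *\<^sub>R u2" for v
  proof -
    obtain al be where "v = al *\<^sub>R (b - a) + be *\<^sub>R (c - a)" using basis2[OF nc0] by blast
    have "v = (al * norm (b - a)) *\<^sub>R u1 + (be * norm (c - a)) *\<^sub>R u2"
    proof -
      have "al *\<^sub>R (b - a) = (al * norm (b - a)) *\<^sub>R u1" unfolding u1_def using ba by simp
      moreover have "be *\<^sub>R (c - a) = (be * norm (c - a)) *\<^sub>R u2" unfolding u2_def using ca by simp
      ultimately show ?thesis using \<open>v = al *\<^sub>R (b - a) + be *\<^sub>R (c - a)\<close> by (simp only:)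
    qed
    then show ?thesis by blast
  qed
  have feq: "f_tri ?P a b c s y = gdist ?P a s + Gf a u1 u2 y" for y
    unfolding u1_def u2_def by (rule f_eq[OF n1[unfolded u1_def] n2[unfolded u2_def]])
  have "f_tri ?P a b c s x \<le> f_tri ?P a b c s x' + dist x x'"
    using G_lip[OF n1 n2 ne bas, of a x x'] feq[of x] feq[of x'] by linarith
  also have "\<dots> < gdist ?P s x' + dist x' x" using assms(7) by (simp add: dist_commute)
  also have "\<dots> \<le> gdist ?P s x" by (rule gdist_split[OF assms(6)])
  finally show ?thesis .
qed

end
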